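(* Let $(\eta_\ell)_{\ell\in\mathbb{N}}\subseteq[0,\infty)$ and let $D:\mathbb{N}\to(1,\infty)$ satisfy $\sum_{k=\ell}^{\ell+N}\eta_k^2\le D(N)\eta_\ell^2$ for all $\ell,N\in\mathbb{N}$. Suppose there exists $N_0\in\mathbb{N}$ with $$q_{\log}:=\log(D(N_0))-\sum_{j=1}^{N_0}D(j)^{-1}<0,$$ and suppose $(\eta_\ell)$ is quasi-monotone: there is $C_{\rm mon}>0$ with $\eta_{\ell+k}^2\le C_{\rm mon}\eta_\ell^2$ for all $\ell,k\in\mathbb{N}$. Then, with $q:=\exp(q_{\log}/N_0)<1$ and $C:=C_{\rm mon}\exp(-q_{\log})$, $$\eta_{\ell+k}^2\le C q^k\eta_\ell^2\quad\text{for all }k,\ell\in\mathbb{N}.$$ *)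

theory Defs
  imports "HOL-Analysis.Analysis"
begin

end

theory Submission
  imports Defs
begin

lemma tail_bound:
  fixes a D :: "nat \<Rightarrow> real"
  assumes a_nonneg: "\<And>l. a l \<ge> 0"
    and D_gt1: "\<And>N. D N > 1"
    and D_bound: "\<And>l N. (\<Sum>k=l..l+N. a k) \<le> D N * a l"
  shows "j \<le> N \<Longrightarrow> (\<Sum>k=l+j..l+N. a k) \<le> exp (- (\<Sum>i=N-j+1..N. 1 / D i)) * (\<Sum>k=l..l+N. a k)"
proof (induction j)
  case 0
  then show ?case by simp
next
  case (Suc j)
  let ?T = "\<lambda>j. (\<Sum>k=l+j..l+N. a k)"
  have jN: "j < N" using Suc by simp
  have IH: "?T j \<le> exp (- (\<Sum>i=N-j+1..N. 1 / D i)) * ?T 0" using Suc by simp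
  have split: "?T j = a (l+j) + ?T (Suc j)"
    using jN by (simp add: sum.atLeast_Suc_atMost)
  have Db: "?T j \<le> D (N-j) * a (l+j)"
    using D_bound[of "l+j" "N-j"] jN by simp
  have Dp: "D (N-j) > 1" using D_gt1 by simp
  have "a (l+j) \<ge> ?T j / D (N-j)" using Db Dp by (simp add: divide_le_eq mult.commute)
  hence T1: "?T (Suc j) \<le> (1 - 1 / D (N-j)) * ?T j"
  proof -
    assume h: "a (l+j) \<ge> ?T j / D (N-j)"
    have "?T (Suc j) = ?T j - a (l+j)" using split by linarith
    also have "\<dots> \<le> ?T j - ?T j / D (N-j)" using h by linarith
    also have "\<dots> = (1 - 1 / D (N-j)) * ?T j" by (simp add: algebra_simps)
    finally show ?thesis .
  qed
  have "1 - 1 / D (N-j) \<le> exp (- (1 / D (N-j)))"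
    using exp_ge_add_one_self[of "- (1 / D (N-j))"] by simp
  have Tnn: "?T j \<ge> 0" by (rule sum_nonneg) (simp add: a_nonneg)
  have T2: "?T (Suc j) \<le> exp (- (1 / D (N-j))) * ?T j"
    using T1 mult_right_mono[OF \<open>1 - 1 / D (N-j) \<le> _\<close> Tnn] by linarith
  also have "\<dots> \<le> exp (- (1 / D (N-j))) * (exp (- (\<Sum>i=N-j+1..N. 1 / D i)) * ?T 0)"
    using IH by (simp add: mult_left_mono)
  also have "\<dots> = exp (- (1 / D (N-j) + (\<Sum>i=N-j+1..N. 1 / D i))) * ?T 0"
    by (simp add: exp_add[symmetric] algebra_simps)
  also have "1 / D (N-j) + (\<Sum>i=N-j+1..N. 1 / D i) = (\<Sum>i=N - Suc j + 1..N. 1 / D i)"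
  proof -
    have "N - Suc j + 1 = N - j" using jN by simp
    moreover have "(\<Sum>i=N-j..N. 1 / D i) = 1 / D (N-j) + (\<Sum>i=Suc (N-j)..N. 1 / D i)"
      by (simp add: sum.atLeast_Suc_atMost)
    ultimately show ?thesis by simp
  qed
  finally show ?case by simp
qed

lemma step_bound:
  fixes a D :: "nat \<Rightarrow> real"
  assumes a_nonneg: "\<And>l. a l \<ge> 0"
    and D_gt1: "\<And>N. D N > 1"
    and D_bound: "\<And>l N. (\<Sum>k=l..l+N. a k) \<le> D N * a l"
  shows "a (l + N) \<le> exp (ln (D N) - (\<Sum>i=1..N. 1 / D i)) * a l"
proof -
  have "a (l+N) = (\<Sum>k=l+N..l+N. a k)" by simp
  also have "\<dots> \<le> exp (- (\<Sum>i=N-N+1..N. 1 / D i)) * (\<Sum>k=l..l+N. a k)"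
    by (rule tail_bound[OF a_nonneg D_gt1 D_bound]) simp
  also have "\<dots> \<le> exp (- (\<Sum>i=1..N. 1 / D i)) * (D N * a l)"
    using D_bound[of l N] by (simp add: mult_left_mono)
  also have "\<dots> = exp (ln (D N) - (\<Sum>i=1..N. 1 / D i)) * a l"
    using D_gt1[of N] by (simp add: exp_diff exp_minus field_simps)
  finally show ?thesis .
qed

theorem mainTheorem3:
  fixes eta :: "nat \<Rightarrow> real" and D :: "nat \<Rightarrow> real"
    and N0 :: nat and Cmon :: real
  assumes eta_nonneg: "\<And>l. eta l \<ge> 0"
    and D_gt1: "\<And>N. D N > 1"
    and D_bound: "\<And>l N. (\<Sum>k=l..l+N. (eta k)\<^sup>2) \<le> D N * (eta l)\<^sup>2"
    and qlog_neg: "ln (D N0) - (\<Sum>j=1..N0. 1 / D j) < 0"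
    and Cmon_pos: "Cmon > 0"
    and quasi_mono: "\<And>l k. (eta (l + k))\<^sup>2 \<le> Cmon * (eta l)\<^sup>2"
  shows "let qlog = ln (D N0) - (\<Sum>j=1..N0. 1 / D j);
             q = exp (qlog / real N0);
             C = Cmon * exp (- qlog)
         in q < 1 \<and> (\<forall>k l. (eta (l + k))\<^sup>2 \<le> C * q ^ k * (eta l)\<^sup>2)"
proof -
  define qlog where "qlog = ln (D N0) - (\<Sum>j=1..N0. 1 / D j)"
  define a where "a = (\<lambda>l. (eta l)\<^sup>2)"
  have ql: "qlog < 0" using qlog_neg qlog_def by simp
  have N0pos: "N0 > 0"
  proof (rule ccontr)
    assume "\<not> N0 > 0"
    hence "N0 = 0" by simp
    with ql qlog_def D_gt1[of 0] show False by simp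
  qed
  have ann: "\<And>l. a l \<ge> 0" unfolding a_def by simp
  have step: "\<And>l. a (l + N0) \<le> exp qlog * a l"
    unfolding qlog_def
    by (rule step_bound[OF ann D_gt1]) (use D_bound in \<open>simp add: a_def\<close>)
  have iter: "\<And>l. a (l + m*N0) \<le> exp qlog ^ m * a l" for m
  proof (induction m)
    case 0 then show ?case by simp
  next
    case (Suc m)
    have "a (l + Suc m * N0) = a ((l + m*N0) + N0)" by (simp add: algebra_simps)
    also have "\<dots> \<le> exp qlog * a (l + m*N0)" by (rule step)
    also have "\<dots> \<le> exp qlog * (exp qlog ^ m * a l)"
      using Suc by (simp add: mult_left_mono)
    finally show ?case by simp
  qed
  have q1: "exp (qlog / real N0) < 1" using ql N0pos by (simp add: divide_neg_pos)
  have main: "a (l + k) \<le> Cmon * exp (- qlog) * exp (qlog / real N0) ^ k * a l" for k l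
  proof -
    define m where "m = k div N0"
    define r where "r = k mod N0"
    have k: "k = m*N0 + r" unfolding m_def r_def by simp
    have rl: "r < N0" unfolding r_def using N0pos by simp
    have "a (l + k) = a ((l + m*N0) + r)" using k by (simp add: algebra_simps)
    also have "\<dots> \<le> Cmon * a (l + m*N0)" using quasi_mono unfolding a_def by blast
    also have "\<dots> \<le> Cmon * (exp qlog ^ m * a l)" using iter Cmon_pos by (simp add: mult_left_mono)
    also have "exp qlog ^ m \<le> exp (- qlog) * exp (qlog / real N0) ^ k"
    proof -
      have e1: "exp qlog ^ m = exp (real m * qlog)" by (simp add: exp_of_nat_mult)
      have e2: "exp (- qlog) * exp (qlog / real N0) ^ k = exp (- qlog + real k * (qlog / real N0))"
        by (simp add: exp_of_nat_mult[symmetric] exp_add[symmetric] algebra_simps)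
      have "real k < (real m + 1) * real N0" using k rl by (simp add: algebra_simps)
      hence "real k / real N0 < real m + 1" using N0pos by (simp add: divide_less_eq)
      hence "qlog * (real m + 1) \<le> qlog * (real k / real N0)"
        by (intro mult_left_mono_neg) (use ql in linarith)+
      hence "real m * qlog \<le> - qlog + real k * (qlog / real N0)" by (simp add: algebra_simps)
      thus ?thesis using e1 e2 by simp
    qed
    hence "Cmon * (exp qlog ^ m * a l) \<le> Cmon * ((exp (- qlog) * exp (qlog / real N0) ^ k) * a l)"
      using Cmon_pos ann[of l] by (simp add: mult_left_mono mult_right_mono)
    finally show ?thesis by (simp add: algebra_simps)
  qed
  show ?thesis unfolding Let_def qlog_def[symmetric] using q1 main unfolding a_def by blast
qed

end
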